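(* Let $d\ge2$. (a) Fix $n\ge2$ and let $\Sigma(\cdot)$ be a singularly affine equivariant scatter functional defined on all empirical measures $P_n=n^{-1}\sum_{j=1}^n\delta_{X_j}$ on $\mathbb{R}^d$ (with arbitrary, not necessarily distinct, $X_j\in\mathbb{R}^d$). For a $d\times n$ data matrix $X$ with $j$th column $X_j$, write $\Sigma(X):=\Sigma(P_n)$, let $\bar X:=n^{-1}\sum_{j=1}^nX_j$ and $\mathbf{1}_n$ the $n\times1$ vector of ones. Then there is a constant $c_n\ge0$, depending on $\Sigma(\cdot)$, such that for every $d\times n$ matrix $X$, $$\Sigma(X-\bar X\mathbf{1}_n')=c_n\,(X-\bar X\mathbf{1}_n')(X-\bar X\mathbf{1}_n')'.$$ (b) If $\Sigma(\cdot)$ is an affinely equivariant scatter functional defined for all $n$ and all empirical measures $P_n$ on $\mathbb{R}^d$, and is weakly continuous as a function of $P_n$, then $\Sigma\equiv0$.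
   Context: $\mathcal{N}_d$ denotes the set of $d\times d$ nonnegative definite symmetric matrices. A functional $Q\mapsto\Sigma(Q)\in\mathcal{N}_d$ on a set $\mathcal{D}$ of Borel probability measures on $\mathbb{R}^d$ is an affinely equivariant scatter functional iff for every nonsingular $d\times d$ matrix $A$ and $v\in\mathbb{R}^d$, with $f(x)=Ax+v$, and every $Q\in\mathcal{D}$, the image law $Q\circ f^{-1}$ is in $\mathcal{D}$ and $\Sigma(Q\circ f^{-1})=A\Sigma(Q)A'$. It is singularly affine equivariant if the same holds for all $d\times d$ matrices $A$, possibly singular. *)

theory Defs
  imports "HOL-Probability.Probability"
begin

definition nnd_matrix :: "real^'d^'d \<Rightarrow> bool" where
  "nnd_matrix M \<longleftrightarrow> transpose M = M \<and> (\<forall>x. 0 \<le> x \<bullet> (M *v x))"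

definition affine_image :: "real^'d^'d \<Rightarrow> real^'d \<Rightarrow> (real^'d) measure \<Rightarrow> (real^'d) measure" where
  "affine_image A v Q = distr Q borel (\<lambda>x. A *v x + v)"

definition scatter_functional :: "(real^'d) measure set \<Rightarrow> ((real^'d) measure \<Rightarrow> real^'d^'d) \<Rightarrow> bool" where
  "scatter_functional D S \<longleftrightarrow> (\<forall>Q\<in>D. nnd_matrix (S Q))"

definition affinely_equivariant :: "(real^'d) measure set \<Rightarrow> ((real^'d) measure \<Rightarrow> real^'d^'d) \<Rightarrow> bool" where
  "affinely_equivariant D S \<longleftrightarrow> scatter_functional D S \<and>
     (\<forall>Q\<in>D. \<forall>A v. invertible A \<longrightarrow>
        affine_image A v Q \<in> D \<and> S (affine_image A v Q) = A ** S Q ** transpose A)"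

definition singularly_affinely_equivariant :: "(real^'d) measure set \<Rightarrow> ((real^'d) measure \<Rightarrow> real^'d^'d) \<Rightarrow> bool" where
  "singularly_affinely_equivariant D S \<longleftrightarrow> scatter_functional D S \<and>
     (\<forall>Q\<in>D. \<forall>A v.
        affine_image A v Q \<in> D \<and> S (affine_image A v Q) = A ** S Q ** transpose A)"

definition empirical :: "'i set \<Rightarrow> ('i \<Rightarrow> real^'d) \<Rightarrow> (real^'d) measure" where
  "empirical I X = distr (measure_pmf (pmf_of_set I)) borel X"

definition data_emp :: "real^'n::finite^'d \<Rightarrow> (real^'d) measure" where
  "data_emp X = empirical UNIV (\<lambda>j. column j X)"

definition col_mean :: "real^'n::finite^'d \<Rightarrow> real^'d" where
  "col_mean X = (1 / real CARD('n)) *\<^sub>R (\<Sum>j\<in>UNIV. column j X)"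

definition centered :: "real^'n::finite^'d \<Rightarrow> real^'n^'d" where
  "centered X = (\<chi> i j. X $ i $ j - col_mean X $ i)"

definition all_empirical :: "(real^'d) measure set" where
  "all_empirical = {empirical {..<n} (X :: nat \<Rightarrow> real^'d) | n X. n \<ge> 1}"

definition weak_conv :: "(nat \<Rightarrow> (real^'d) measure) \<Rightarrow> (real^'d) measure \<Rightarrow> bool" where
  "weak_conv Qs Q \<longleftrightarrow> (\<forall>f :: real^'d \<Rightarrow> real. continuous_on UNIV f \<and> bounded (range f) \<longrightarrow>
      (\<lambda>k. integral\<^sup>L (Qs k) f) \<longlonglongrightarrow> integral\<^sup>L Q f)"

text \<open>Weak continuity of S on the domain D (sequential; the weak topology is metrizable).\<close>
definition weakly_continuous_on :: "(real^'d) measure set \<Rightarrow> ((real^'d) measure \<Rightarrow> real^'d^'d) \<Rightarrow> bool" where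
  "weakly_continuous_on D S \<longleftrightarrow>
     (\<forall>Qs Q. (\<forall>k. Qs k \<in> D) \<and> Q \<in> D \<and> weak_conv Qs Q \<longrightarrow> (\<lambda>k. S (Qs k)) \<longlonglongrightarrow> S Q)"

end

theory Submission
  imports Defs
begin


definition sw :: "'i \<Rightarrow> 'i \<Rightarrow> 'i \<Rightarrow> 'i" where
  "sw a b = (\<lambda>i. if i = a then b else if i = b then a else i)"

lemma sw_sw[simp]: "sw a b (sw a b i) = i"
  by (auto simp: sw_def)

lemma sw_bij: "a \<in> I \<Longrightarrow> b \<in> I \<Longrightarrow> bij_betw (sw a b) I I"
  by (rule bij_betw_byWitness[where f'="sw a b"]) (auto simp: sw_def)

definition dl :: "'i \<Rightarrow> 'i \<Rightarrow> real" where "dl k = (\<lambda>i. if i = k then 1 else 0)"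

lemma dl_sw: "dl k \<circ> sw a b = dl (sw a b k)"
  unfolding dl_def comp_def by (rule ext) (auto simp: sw_def)

lemma quad_core:
  fixes g :: "('i \<Rightarrow> real) \<Rightarrow> real" and I :: "'i set"
  assumes fin: "finite I" and card2: "card I \<ge> 2"
  and Q: "\<And>u v. \<exists>p q r. \<forall>\<alpha> \<beta>. g (\<lambda>i. \<alpha> * u i + \<beta> * v i) = p * \<alpha>^2 + q * \<alpha>*\<beta> + r * \<beta>^2"
  and P: "\<And>a b y. a\<in>I \<Longrightarrow> b\<in>I \<Longrightarrow> g (y \<circ> sw a b) = g y"
  and T: "\<And>y s. g (\<lambda>i. y i + s) = g y"
  and L: "\<And>y z. (\<forall>i\<in>I. y i = z i) \<Longrightarrow> g y = g z"
  and N: "\<And>y. g y \<ge> 0"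
  shows "\<exists>c\<ge>0. \<forall>y. g y = c * (\<Sum>i\<in>I. (y i - (\<Sum>j\<in>I. y j)/card I)^2)"
proof -
  have Q': "\<exists>q. \<forall>\<alpha> \<beta>. g (\<lambda>i. \<alpha> * u i + \<beta> * v i) = g u * \<alpha>^2 + q * \<alpha>*\<beta> + g v *\<beta>^2" for u v
  proof -
    obtain p q r where pqr: "\<forall>\<alpha> \<beta>. g (\<lambda>i. \<alpha> * u i + \<beta> * v i) = p * \<alpha>^2 + q * \<alpha>*\<beta> + r * \<beta>^2"
      using Q by blast
    have "g u = p" using pqr[rule_format, of 1 0] by simp
    moreover have "g v = r" using pqr[rule_format, of 0 1] by simp
    ultimately show ?thesis using pqr by blast
  qed
  have hom: "g (\<lambda>i. a * x i) = a^2 * g x" for a x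
  proof -
    obtain q where "\<forall>\<alpha> \<beta>. g (\<lambda>i. \<alpha> * x i + \<beta> * x i) = g x * \<alpha>^2 + q * \<alpha>*\<beta> + g x * \<beta>^2"
      using Q' by blast
    from this[rule_format, of a 0] show ?thesis by (simp add: mult.commute)
  qed
  have g0: "g (\<lambda>i. 0) = 0" using hom[of 0] by simp
  have gneg: "g (\<lambda>i. - x i) = g x" for x using hom[of "-1" x] by simp
  have par: "g (\<lambda>i. x i + z i) + g (\<lambda>i. x i - z i) = 2 * g x + 2 * g z" for x z
  proof -
    obtain q where q: "\<forall>\<alpha> \<beta>. g (\<lambda>i. \<alpha> * x i + \<beta> * z i) = g x * \<alpha>^2 + q * \<alpha>*\<beta> + g z * \<beta>^2"
      using Q' by blast
    from q[rule_format, of 1 1] q[rule_format, of 1 "-1"] show ?thesis by simp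
  qed
  define B where "B x z = (g (\<lambda>i. x i + z i) - g (\<lambda>i. x i - z i)) / 4" for x z
  have Bhom: "B (\<lambda>i. a * x i) z = a * B x z" for a x z
  proof -
    obtain q where q: "\<forall>\<alpha> \<beta>. g (\<lambda>i. \<alpha> * x i + \<beta> * z i) = g x * \<alpha>^2 + q * \<alpha>*\<beta> + g z * \<beta>^2"
      using Q' by blast
    have "B (\<lambda>i. a * x i) z = a * q / 2"
      using q[rule_format, of a 1] q[rule_format, of a "-1"] unfolding B_def by (simp add: algebra_simps)
    moreover have "B x z = q / 2"
      using q[rule_format, of 1 1] q[rule_format, of 1 "-1"] unfolding B_def by (simp add: algebra_simps)
    ultimately show ?thesis by (metis times_divide_eq_right)
  qed
  have Bsym: "B x z = B z x" for x z
  proof -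
    have "g (\<lambda>i. x i - z i) = g (\<lambda>i. z i - x i)"
      using gneg[of "\<lambda>i. z i - x i"] by simp
    moreover have "(\<lambda>i. x i + z i) = (\<lambda>i. z i + x i)" by (rule ext) (rule add.commute)
    ultimately show ?thesis unfolding B_def by simp
  qed
  have Bdiag: "B x x = g x" for x
  proof -
    have "(\<lambda>i. x i + x i) = (\<lambda>i. 2 * x i)" "(\<lambda>i. x i - x i) = (\<lambda>i. 0)" by auto
    then show ?thesis using hom[of 2 x] g0 unfolding B_def by simp
  qed
  have Badd: "B (\<lambda>i. x i + y i) z = B x z + B y z" for x y z
  proof -
    define m where "m i = (x i + y i) / 2" for i
    define h where "h i = (x i - y i) / 2" for i
    have e1: "(\<lambda>i. m i + z i + h i) = (\<lambda>i. x i + z i)" "(\<lambda>i. m i + z i - h i) = (\<lambda>i. y i + z i)"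
      "(\<lambda>i. m i - z i + h i) = (\<lambda>i. x i - z i)" "(\<lambda>i. m i - z i - h i) = (\<lambda>i. y i - z i)"
      "(\<lambda>i. 2 * m i) = (\<lambda>i. x i + y i)"
      unfolding m_def h_def by (auto simp: field_simps)
    have 1: "g (\<lambda>i. x i + z i) + g (\<lambda>i. y i + z i) = 2 * g (\<lambda>i. m i + z i) + 2 * g h"
      using par[of "\<lambda>i. m i + z i" h] unfolding e1 .
    have 2: "g (\<lambda>i. x i - z i) + g (\<lambda>i. y i - z i) = 2 * g (\<lambda>i. m i - z i) + 2 * g h"
      using par[of "\<lambda>i. m i - z i" h] unfolding e1 .
    have 3: "B (\<lambda>i. x i + y i) z = 2 * B m z"
      using Bhom[of 2 m z] unfolding e1 .
    show ?thesis using 1 2 3 unfolding B_def by argo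
  qed
  have B0: "B (\<lambda>i. 0) z = 0" for z using Bhom[of 0 z z] by simp
  have Bsum: "finite K \<Longrightarrow> B (\<lambda>i. \<Sum>k\<in>K. c k * f k i) z = (\<Sum>k\<in>K. c k * B (f k) z)" for K c f z
  proof (induction K rule: finite_induct)
    case empty then show ?case using B0 by simp
  next
    case (insert k K)
    then show ?case using Badd[of "\<lambda>i. c k * f k i" "\<lambda>i. \<Sum>k\<in>K. c k * f k i" z] Bhom[of "c k" "f k" z]
      by simp
  qed
  have Bperm: "B (x \<circ> sw a b) (z \<circ> sw a b) = B x z" if "a \<in> I" "b \<in> I" for x z a b
    using P[OF that, of "\<lambda>i. x i + z i"] P[OF that, of "\<lambda>i. x i - z i"] unfolding B_def
    by (simp add: comp_def)
  obtain i0 where i0: "i0 \<in> I" using card2 fin by (metis card.empty ex_in_conv not_numeral_le_zero)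
  obtain j0 where j0: "j0 \<in> I" "j0 \<noteq> i0"
  proof -
    have "card (I - {i0}) \<ge> 1" using card2 i0 fin by simp
    then obtain j where "j \<in> I - {i0}" by (metis card.empty ex_in_conv not_one_le_zero)
    then show ?thesis using that by blast
  qed
  define \<alpha> where "\<alpha> = B (dl i0) (dl i0)"
  define \<beta> where "\<beta> = B (dl i0) (dl j0)"
  have Balpha: "B (dl k) (dl k) = \<alpha>" if "k \<in> I" for k
    using Bperm[OF i0 that, of "dl k" "dl k"] unfolding \<alpha>_def dl_sw by (cases "k = i0") (simp_all add: sw_def)
  have Bbeta: "B (dl k) (dl l) = \<beta>" if "k \<in> I" "l \<in> I" "k \<noteq> l" for k l
  proof -
    define l' where "l' = sw i0 k j0"
    have l': "l' \<in> I" "l' \<noteq> k" using j0 i0 that unfolding l'_def sw_def by auto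
    have "\<beta> = B (dl k) (dl l')"
      using Bperm[OF i0 that(1), of "dl i0" "dl j0"] unfolding \<beta>_def dl_sw l'_def by (simp add: sw_def)
    also have "\<dots> = B (dl k) (dl l)"
      using Bperm[OF l'(1) that(2), of "dl k" "dl l'"] l' that unfolding dl_sw by (simp add: sw_def)
    finally show ?thesis by simp
  qed
  have Bdl: "B (dl l) (dl k) = \<beta> + (\<alpha> - \<beta>) * (if l = k then 1 else 0)" if "k \<in> I" "l \<in> I" for k l
    using Balpha Bbeta that by auto
  define c where "c = \<alpha> - \<beta>"
  have main: "g y = c * (\<Sum>i\<in>I. (y i - (\<Sum>j\<in>I. y j)/card I)^2)" for y
  proof -
    define w where "w i = y i - (\<Sum>j\<in>I. y j)/card I" for i
    have sw0: "(\<Sum>i\<in>I. w i) = 0"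
      using card2 unfolding w_def by (simp add: sum_subtractf)
    define W where "W i = (\<Sum>k\<in>I. w k * dl k i)" for i
    have "g y = g w" unfolding w_def using T[of y "- (\<Sum>j\<in>I. y j)/card I"] by simp
    also have "\<dots> = g W" by (rule L) (simp add: W_def dl_def fin if_distrib sum.delta' cong: if_cong)
    also have "\<dots> = B W W" by (rule Bdiag[symmetric])
    also have "\<dots> = (\<Sum>k\<in>I. w k * B (dl k) W)"
      unfolding W_def[abs_def] by (rule Bsum[OF fin])
    also have "\<dots> = (\<Sum>k\<in>I. w k * (\<Sum>l\<in>I. w l * B (dl l) (dl k)))"
      unfolding W_def[abs_def] using Bsum[OF fin] Bsym by simp
    also have "\<dots> = (\<Sum>k\<in>I. w k * (\<Sum>l\<in>I. w l * (\<beta> + (\<alpha> - \<beta>) * (if l = k then 1 else 0))))"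
      using Bdl by (auto intro!: sum.cong)
    also have "\<dots> = (\<Sum>k\<in>I. w k * (c * w k))"
    proof (rule sum.cong[OF refl])
      fix k assume k: "k \<in> I"
      have "(\<Sum>l\<in>I. w l * (\<beta> + (\<alpha> - \<beta>) * (if l = k then 1 else 0)))
          = \<beta> * (\<Sum>l\<in>I. w l) + (\<Sum>l\<in>I. (if l = k then c * w l else 0))"
      proof -
        have "(\<Sum>l\<in>I. w l * (\<beta> + (\<alpha> - \<beta>) * (if l = k then 1 else 0)))
          = (\<Sum>l\<in>I. \<beta> * w l + (if l = k then c * w l else 0))"
          by (rule sum.cong) (auto simp: c_def algebra_simps)
        also have "\<dots> = \<beta> * (\<Sum>l\<in>I. w l) + (\<Sum>l\<in>I. (if l = k then c * w l else 0))"
          by (simp add: sum.distrib sum_distrib_left)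
        finally show ?thesis .
      qed
      also have "\<dots> = c * w k" using sw0 k fin by simp
      finally show "w k * (\<Sum>l\<in>I. w l * (\<beta> + (\<alpha> - \<beta>) * (if l = k then 1 else 0))) = w k * (c * w k)"
        by simp
    qed
    also have "\<dots> = c * (\<Sum>i\<in>I. (w i)^2)" by (simp add: sum_distrib_left power2_eq_square mult_ac)
    finally show ?thesis unfolding w_def .
  qed
  have "c \<ge> 0"
  proof -
    have pos: "(\<Sum>i\<in>I. (dl i0 i - (\<Sum>j\<in>I. dl i0 j)/card I)^2) > 0"
    proof -
      have s: "(\<Sum>j\<in>I. dl i0 j) = 1" using i0 fin by (simp add: dl_def)
      have "(dl i0 i0 - 1/card I)^2 > 0" using card2 by (simp add: dl_def)
      then show ?thesis unfolding s
        by (intro sum_pos2[OF fin i0]) auto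
    qed
    from N[of "dl i0"] main[of "dl i0"] pos show ?thesis
      by (simp add: zero_le_mult_iff)
  qed
  then show ?thesis using main by blast
qed



lemma sym_quad_eq:
  fixes A B :: "real^'d^'d"
  assumes "transpose A = A" "transpose B = B" "\<And>a. a \<bullet> (A *v a) = a \<bullet> (B *v a)"
  shows "A = B"
proof -
  have bil: "x \<bullet> (A *v y) = y \<bullet> (A *v x)" if "transpose A = A" for A :: "real^'d^'d" and x y
    by (metis dot_lmul_matrix inner_commute that vector_transpose_matrix)
  have "x \<bullet> (A *v y) = x \<bullet> (B *v y)" for x y
  proof -
    have "(x + y) \<bullet> (A *v (x + y)) = (x + y) \<bullet> (B *v (x + y))" by (rule assms(3))
    then show ?thesis using assms(3)[of x] assms(3)[of y] bil[OF assms(1), of x y] bil[OF assms(2), of x y]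
      by (simp add: matrix_vector_right_distrib inner_add_left inner_add_right)
  qed
  then have "A *v y = B *v y" for y
    by (metis inner_commute vector_eq_rdot ) 
  then show ?thesis by (metis matrix_eq)
qed

lemma matrix_core:
  fixes M :: "('i \<Rightarrow> real^'d) \<Rightarrow> real^'d^'d" and I :: "'i set" and ka kb :: 'd
  assumes fin: "finite I" and card2: "card I \<ge> 2" and ka1: "ka \<noteq> kb"
  and L1: "\<And>X a. a \<bullet> (M X *v a) = axis ka 1 \<bullet> (M (\<lambda>i. (a \<bullet> X i) *\<^sub>R axis ka 1) *v axis ka 1)"
  and Tr: "\<And>X v. M (\<lambda>i. X i + v) = M X"
  and Perm: "\<And>X a b. a\<in>I \<Longrightarrow> b\<in>I \<Longrightarrow> M (X \<circ> sw a b) = M X"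
  and Loc: "\<And>X Y. (\<forall>i\<in>I. X i = Y i) \<Longrightarrow> M X = M Y"
  and PSD: "\<And>X a. a \<bullet> (M X *v a) \<ge> 0"
  shows "\<exists>c\<ge>0. \<forall>X a. a \<bullet> (M X *v a) = c * (\<Sum>i\<in>I. (a \<bullet> X i - (\<Sum>j\<in>I. a \<bullet> X j)/card I)^2)"
proof -
  define e where "e = (axis ka 1 :: real^'d)"
  define e2 where "e2 = (axis kb 1 :: real^'d)"
  have ee: "e \<bullet> e = 1" "e \<bullet> e2 = 0" "e2 \<bullet> e = 0" "e2 \<bullet> e2 = 1"
    using ka1 unfolding e_def e2_def by (auto simp: inner_axis_axis)
  define g where "g y = e \<bullet> (M (\<lambda>i. y i *\<^sub>R e) *v e)" for y
  have "\<exists>c\<ge>0. \<forall>y. g y = c * (\<Sum>i\<in>I. (y i - (\<Sum>j\<in>I. y j)/card I)^2)"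
  proof (rule quad_core[OF fin card2])
    fix u v :: "'i \<Rightarrow> real"
    define X where "X i = u i *\<^sub>R e + v i *\<^sub>R e2" for i
    define N where "N = M X"
    show "\<exists>p q r. \<forall>\<alpha> \<beta>. g (\<lambda>i. \<alpha> * u i + \<beta> * v i) = p * \<alpha>^2 + q * \<alpha> * \<beta> + r * \<beta>^2"
    proof (intro exI allI)
      fix \<alpha> \<beta> :: real
      have "g (\<lambda>i. \<alpha> * u i + \<beta> * v i) = (\<alpha> *\<^sub>R e + \<beta> *\<^sub>R e2) \<bullet> (N *v (\<alpha> *\<^sub>R e + \<beta> *\<^sub>R e2))"
        unfolding N_def L1[of _ X] g_def e_def[symmetric]
        by (simp add: X_def inner_add_left inner_add_right ee mult.commute)
      also have "\<dots> = (e \<bullet> (N *v e)) * \<alpha>^2 + (e \<bullet> (N *v e2) + e2 \<bullet> (N *v e)) * \<alpha> * \<beta> + (e2 \<bullet> (N *v e2)) * \<beta>^2"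
        by (simp add: matrix_vector_right_distrib inner_add_left inner_add_right matrix_vector_mult_scaleR
            algebra_simps power2_eq_square)
      finally show "g (\<lambda>i. \<alpha> * u i + \<beta> * v i) = (e \<bullet> (N *v e)) * \<alpha>^2 + (e \<bullet> (N *v e2) + e2 \<bullet> (N *v e)) * \<alpha> * \<beta> + (e2 \<bullet> (N *v e2)) * \<beta>^2" .
    qed
  next
    fix a b y assume ab: "a \<in> I" "b \<in> I"
    show "g (y \<circ> sw a b) = g y"
      unfolding g_def using Perm[OF ab, of "\<lambda>i. y i *\<^sub>R e"] by (simp add: comp_def)
  next
    fix y s
    show "g (\<lambda>i. y i + s) = g y"
      unfolding g_def using Tr[of "\<lambda>i. y i *\<^sub>R e" "s *\<^sub>R e"] by (simp add: scaleR_add_left)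
  next
    fix y z :: "'i \<Rightarrow> real" assume "\<forall>i\<in>I. y i = z i"
    then show "g y = g z" unfolding g_def by (metis (mono_tags, lifting) Loc)
  next
    fix y show "g y \<ge> 0" unfolding g_def by (rule PSD)
  qed
  then obtain c where c: "c \<ge> 0" "\<And>y. g y = c * (\<Sum>i\<in>I. (y i - (\<Sum>j\<in>I. y j)/card I)^2)" by blast
  have "a \<bullet> (M X *v a) = c * (\<Sum>i\<in>I. (a \<bullet> X i - (\<Sum>j\<in>I. a \<bullet> X j)/card I)^2)" for X a
    using c(2)[of "\<lambda>i. a \<bullet> X i"] unfolding g_def e_def L1[of a X] by simp
  then show ?thesis using c(1) by blast
qed



lemma emp_affine:
  assumes "finite I" "I \<noteq> {}"
  shows "affine_image A v (empirical I Y) = empirical I (\<lambda>i. A *v Y i + v)"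
  unfolding affine_image_def empirical_def
  apply (subst distr_distr)
  apply (auto simp: comp_def intro!: borel_measurable_continuous_onI continuous_intros)
  done

lemma emp_loc:
  assumes "finite I" "I \<noteq> {}" "\<forall>i\<in>I. X i = Y i"
  shows "empirical I X = empirical I Y"
  unfolding empirical_def
  by (rule distr_cong_AE) (use assms in \<open>auto simp: AE_measure_pmf_iff\<close>)

lemma emp_perm:
  assumes "finite I" "I \<noteq> {}" "bij_betw \<sigma> I I"
  shows "empirical I (X \<circ> \<sigma>) = empirical I X"
proof -
  have "empirical I (X \<circ> \<sigma>) = distr (distr (measure_pmf (pmf_of_set I)) (count_space UNIV) \<sigma>) borel X"
    unfolding empirical_def by (subst distr_distr) auto
  also have "\<dots> = distr (measure_pmf (map_pmf \<sigma> (pmf_of_set I))) borel X"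
    by (simp add: map_pmf_rep_eq)
  also have "map_pmf \<sigma> (pmf_of_set I) = pmf_of_set I"
    using assms by (simp add: map_pmf_of_set_inj bij_betw_def)
  finally show ?thesis unfolding empirical_def .
qed

lemma emp_integral:
  assumes "finite I" "I \<noteq> {}" "continuous_on UNIV g"
  shows "integral\<^sup>L (empirical I Y) (g :: real^'d \<Rightarrow> real) = (\<Sum>i\<in>I. g (Y i)) / card I"
  unfolding empirical_def
  apply (subst integral_distr)
  using assms by (auto intro: borel_measurable_continuous_onI simp: integral_pmf_of_set)



definition outer :: "real^'d \<Rightarrow> real^'d \<Rightarrow> real^'d^'d" where
  "outer x y = (\<chi> i j. x$i * y$j)"

lemma outer_mv: "outer x y *v z = (y \<bullet> z) *\<^sub>R x"
  by (simp add: outer_def matrix_vector_mult_def inner_vec_def vec_eq_iff sum_distrib_left mult_ac)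

lemma outer_vm: "w v* outer x y = (w \<bullet> x) *\<^sub>R y"
  by (simp add: outer_def vector_matrix_mult_def inner_vec_def vec_eq_iff sum_distrib_left mult_ac)

lemma quad_conj:
  fixes A M :: "real^'d^'d"
  shows "e \<bullet> ((A ** M ** transpose A) *v e) = (e v* A) \<bullet> (M *v (e v* A))"
proof -
  have "(A ** M ** transpose A) *v e = A *v (M *v (transpose A *v e))"
    by (simp only: matrix_vector_mul_assoc matrix_mul_assoc)
  then show ?thesis by (simp only: dot_lmul_matrix[symmetric] transpose_matrix_vector)
qed

lemma quad_CCt:
  fixes C :: "real^'n::finite^'d"
  shows "a \<bullet> ((C ** transpose C) *v a) = (\<Sum>j\<in>UNIV. (a \<bullet> column j C)^2)"
proof -
  have "(C ** transpose C) *v a = C *v (transpose C *v a)"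
    by (simp only: matrix_vector_mul_assoc matrix_mul_assoc)
  then have "a \<bullet> ((C ** transpose C) *v a) = (a v* C) \<bullet> (a v* C)"
    by (simp only: dot_lmul_matrix[symmetric] transpose_matrix_vector)
  also have "\<dots> = (\<Sum>j\<in>UNIV. (a \<bullet> column j C)^2)"
    by (simp add: inner_vec_def vector_matrix_mult_def column_def power2_eq_square mult_ac)
  finally show ?thesis .
qed

lemma nnd_sym: "nnd_matrix M \<Longrightarrow> transpose M = M" by (simp add: nnd_matrix_def)
lemma nnd_psd: "nnd_matrix M \<Longrightarrow> 0 \<le> x \<bullet> (M *v x)" by (simp add: nnd_matrix_def)

lemma transpose_scaleR_mm: "transpose (c *\<^sub>R (C ** transpose C)) = c *\<^sub>R (C ** transpose (C :: real^'n::finite^'d::finite))"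
proof -
  have "transpose (c *\<^sub>R (C ** transpose C)) = c *\<^sub>R transpose (C ** transpose C)"
    by (simp add: transpose_def vec_eq_iff)
  then show ?thesis by (simp add: matrix_transpose_mul)
qed

lemma card2_two:
  assumes "CARD('d::finite) \<ge> 2" shows "\<exists>k0 k1 :: 'd. k0 \<noteq> k1"
proof -
  have "\<not> (\<forall>x y :: 'd. x = y)"
  proof
    assume "\<forall>x y :: 'd. x = y"
    then have "card (UNIV :: 'd set) \<le> Suc 0" by (simp add: card_le_Suc0_iff_eq)
    then show False using assms by simp
  qed
  then show ?thesis by blast
qed

lemma part_a:
  assumes d2: "CARD('d::finite) \<ge> 2" and n2: "CARD('n::finite) \<ge> 2"
  and S: "singularly_affinely_equivariant (range (data_emp :: real^'n^'d \<Rightarrow> _)) S"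
  shows "\<exists>c\<ge>0. \<forall>X :: real^'n^'d.
           S (data_emp (centered X)) = c *\<^sub>R (centered X ** transpose (centered X))"
proof -
  obtain k0 k1 :: 'd where k01: "k0 \<noteq> k1" using card2_two[OF d2] by blast
  define e where "e = (axis k0 1 :: real^'d)"
  have inD: "empirical UNIV Y \<in> range (data_emp :: real^'n^'d \<Rightarrow> _)" for Y :: "'n \<Rightarrow> real^'d"
  proof -
    have "empirical UNIV Y = data_emp (\<chi> i j. Y j $ i)"
      unfolding data_emp_def by (simp add: column_def)
    then show ?thesis by (metis rangeI)
  qed
  have eq: "S (empirical UNIV (\<lambda>i. A *v Y i + v)) = A ** S (empirical UNIV Y) ** transpose A"
    for A v and Y :: "'n \<Rightarrow> real^'d"
  proof -
    have "affine_image A v (empirical UNIV Y) = empirical UNIV (\<lambda>i. A *v Y i + v)"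
      by (rule emp_affine) auto
    moreover have "S (affine_image A v (empirical UNIV Y)) = A ** S (empirical UNIV Y) ** transpose A"
      using S inD[of Y] unfolding singularly_affinely_equivariant_def by blast
    ultimately show ?thesis by simp
  qed
  have nnd: "nnd_matrix (S (empirical UNIV Y))" for Y :: "'n \<Rightarrow> real^'d"
    using S inD[of Y] unfolding singularly_affinely_equivariant_def scatter_functional_def by blast
  define M where "M Y = S (empirical UNIV Y)" for Y :: "'n \<Rightarrow> real^'d"
  have "\<exists>c\<ge>0. \<forall>X a. a \<bullet> (M X *v a) = c * (\<Sum>i\<in>UNIV. (a \<bullet> X i - (\<Sum>j\<in>UNIV. a \<bullet> X j)/card (UNIV::'n set))^2)"
  proof (rule matrix_core[where I = UNIV and ka = k0 and kb = k1])
    show "finite (UNIV :: 'n set)" by simp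
    show "k0 \<noteq> k1" by (rule k01)
    show "2 \<le> card (UNIV :: 'n set)" using n2 by simp
  next
    fix X :: "'n \<Rightarrow> real^'d" and a
    have "M (\<lambda>i. (a \<bullet> X i) *\<^sub>R e) = outer e a ** M X ** transpose (outer e a)"
      unfolding M_def using eq[of "outer e a" X 0] by (simp add: outer_mv)
    then show "a \<bullet> (M X *v a) = axis k0 1 \<bullet> (M (\<lambda>i. (a \<bullet> X i) *\<^sub>R axis k0 1) *v axis k0 1)"
      unfolding e_def[symmetric] by (simp add: quad_conj outer_vm e_def inner_axis_axis)
  next
    fix X :: "'n \<Rightarrow> real^'d" and v
    show "M (\<lambda>i. X i + v) = M X" unfolding M_def using eq[of "mat 1" X v] by simp
  next
    fix X :: "'n \<Rightarrow> real^'d" and a b :: 'n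
    have "bij_betw (sw a b) UNIV UNIV" by (rule sw_bij) auto
    then show "M (X \<circ> sw a b) = M X" unfolding M_def
      using emp_perm[of "UNIV :: 'n set" "sw a b" X] by simp
  next
    fix X Y :: "'n \<Rightarrow> real^'d" assume "\<forall>i\<in>UNIV. X i = Y i"
    then have "X = Y" by auto
    then show "M X = M Y" by simp
  next
    fix X :: "'n \<Rightarrow> real^'d" and a
    show "0 \<le> a \<bullet> (M X *v a)" unfolding M_def by (rule nnd_psd[OF nnd])
  qed
  then obtain c where c: "c \<ge> 0"
    "\<And>X a. a \<bullet> (M X *v a) = c * (\<Sum>i\<in>UNIV. (a \<bullet> X i - (\<Sum>j\<in>UNIV. a \<bullet> X j)/card (UNIV::'n set))^2)"
    by blast
  have "S (data_emp (centered X)) = c *\<^sub>R (centered X ** transpose (centered X))" for X :: "real^'n^'d"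
  proof (rule sym_quad_eq)
    show "transpose (S (data_emp (centered X))) = S (data_emp (centered X))"
      unfolding data_emp_def by (rule nnd_sym[OF nnd])
    show "transpose (c *\<^sub>R (centered X ** transpose (centered X))) = c *\<^sub>R (centered X ** transpose (centered X))"
      by (rule transpose_scaleR_mm)
    fix a
    have col: "column j (centered X) = column j X - col_mean X" for j
      by (simp add: centered_def column_def vec_eq_iff)
    have mean: "(\<Sum>j\<in>UNIV. a \<bullet> column j X) / card (UNIV::'n set) = a \<bullet> col_mean X"
      by (simp add: col_mean_def inner_sum_right)
    have "S (data_emp (centered X)) = M (\<lambda>j. column j X)"
      unfolding M_def data_emp_def col using eq[of "mat 1" "\<lambda>j. column j X" "- col_mean X"] by simp
    have cc: "a \<bullet> column j (centered X) = a \<bullet> column j X - a \<bullet> col_mean X" for j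
      unfolding col by (rule inner_diff_right)
    have "a \<bullet> (S (data_emp (centered X)) *v a) = a \<bullet> (M (\<lambda>j. column j X) *v a)"
      using \<open>S (data_emp (centered X)) = M (\<lambda>j. column j X)\<close> by simp
    also have "\<dots> = c * (\<Sum>j\<in>UNIV. (a \<bullet> column j X - (\<Sum>j\<in>UNIV. a \<bullet> column j X)/card (UNIV::'n set))^2)"
      by (rule c(2))
    also have "\<dots> = c * (\<Sum>j\<in>UNIV. (a \<bullet> column j (centered X))^2)"
      by (simp only: mean cc)
    also have "\<dots> = a \<bullet> ((c *\<^sub>R (centered X ** transpose (centered X))) *v a)"
    proof -
      have "(c *\<^sub>R (centered X ** transpose (centered X))) *v a = c *\<^sub>R ((centered X ** transpose (centered X)) *v a)"
        by (simp add: matrix_vector_mult_def vec_eq_iff sum_distrib_left mult_ac)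
      then show ?thesis by (simp add: quad_CCt)
    qed
    finally show "a \<bullet> (S (data_emp (centered X)) *v a) = a \<bullet> ((c *\<^sub>R (centered X ** transpose (centered X))) *v a)" .
  qed
  then show ?thesis using c(1) by blast
qed



lemma sum_mod_dup: "(\<Sum>i<m*n. h (i mod n)) = real m * (\<Sum>i<n. (h i :: real))"
proof -
  have "(\<Sum>i<m*n. h (i mod n)) = (\<Sum>q<m. sum (\<lambda>i. h (i mod n)) {q*n..<q*n+n})"
    by (rule sum.nat_group[symmetric])
  also have "\<dots> = (\<Sum>q<m. (\<Sum>i<n. h i))"
  proof (rule sum.cong[OF refl])
    fix q
    have "sum (\<lambda>i. h (i mod n)) {0 + q*n..<n + q*n} = (\<Sum>i\<in>{0..<n}. h ((i + q*n) mod n))"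
      by (rule sum.shift_bounds_nat_ivl)
    also have "\<dots> = (\<Sum>i<n. h i)"
      by (rule sum.cong) auto
    finally show "sum (\<lambda>i. h (i mod n)) {q*n..<q*n+n} = (\<Sum>i<n. h i)" by (simp add: add.commute)
  qed
  also have "\<dots> = real m * (\<Sum>i<n. h i)" by simp
  finally show ?thesis .
qed

lemma inv_ker: "invertible (A :: real^'d^'d) \<longleftrightarrow> (\<forall>x. A *v x = 0 \<longrightarrow> x = 0)"
  using invertible_left_inverse matrix_left_invertible_ker by blast

lemma sc_mv: "(c *\<^sub>R A :: real^'d^'d) *v x = c *\<^sub>R (A *v x)"
  by (simp add: matrix_vector_mult_def vec_eq_iff sum_distrib_left mult_ac)

lemma smat_mv: "(c *\<^sub>R mat 1 :: real^'d^'d) *v x = c *\<^sub>R x"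
  by (simp add: sc_mv)

lemma smat_left: "(c *\<^sub>R mat 1 :: real^'d^'d) ** M = c *\<^sub>R M"
  by (simp add: scalar_matrix_assoc[symmetric])

lemma smat_right: "M ** (c *\<^sub>R mat 1 :: real^'d^'d) = c *\<^sub>R M"
  by (simp add: matrix_matrix_mult_def mat_def vec_eq_iff if_distrib cong: if_cong)

lemma smat_transpose: "transpose (c *\<^sub>R mat 1 :: real^'d^'d) = c *\<^sub>R mat 1"
  by (simp add: transpose_def mat_def vec_eq_iff)

lemma smat_inv: "c \<noteq> 0 \<Longrightarrow> invertible (c *\<^sub>R mat 1 :: real^'d^'d)"
  unfolding inv_ker smat_mv by simp

lemma A_mv: "(t *\<^sub>R mat 1 + outer e a :: real^'d^'d) *v y = t *\<^sub>R y + (a \<bullet> y) *\<^sub>R e"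
  by (simp add: matrix_vector_mult_add_rdistrib smat_mv outer_mv)

lemma A_vm: "w v* (t *\<^sub>R mat 1 + outer e a :: real^'d^'d) = t *\<^sub>R w + (w \<bullet> e) *\<^sub>R a"
proof -
  have "w v* (t *\<^sub>R mat 1 + outer e a) = transpose (t *\<^sub>R mat 1 + outer e a) *v w"
    by simp
  also have "transpose (t *\<^sub>R mat 1 + outer e a) = t *\<^sub>R mat 1 + outer a e"
    by (simp add: transpose_def mat_def outer_def vec_eq_iff mult.commute)
  finally show ?thesis by (simp add: A_mv inner_commute)
qed

lemma A_inv:
  assumes "t \<noteq> 0" "t + a \<bullet> e \<noteq> 0"
  shows "invertible (t *\<^sub>R mat 1 + outer e a :: real^'d^'d)"
  unfolding inv_ker A_mv
proof (intro allI impI)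
  fix x :: "real^'d" assume h: "t *\<^sub>R x + (a \<bullet> x) *\<^sub>R e = 0"
  have "a \<bullet> (t *\<^sub>R x + (a \<bullet> x) *\<^sub>R e) = 0" using h by simp
  then have "(a \<bullet> x) * (t + a \<bullet> e) = 0" by (simp add: inner_add_right algebra_simps)
  then have "a \<bullet> x = 0" using assms by simp
  then show "x = 0" using h assms by simp
qed

lemma axis_quad: "axis k 1 \<bullet> (M *v axis k 1) = (M :: real^'d^'d) $ k $ k"
  by (simp add: matrix_vector_mult_basis column_def inner_axis')

lemma quad_expand:
  fixes M :: "real^'d^'d"
  shows "(t *\<^sub>R e + a) \<bullet> (M *v (t *\<^sub>R e + a)) =
     t^2 * (e \<bullet> (M *v e)) + t * (e \<bullet> (M *v a) + a \<bullet> (M *v e)) + a \<bullet> (M *v a)"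
  by (simp add: matrix_vector_right_distrib inner_add_left inner_add_right matrix_vector_mult_scaleR
      algebra_simps power2_eq_square)

lemma sq_scale: "(\<Sum>i\<in>I. (r * x i - (\<Sum>j\<in>I. r * x j)/n)^2) = r^2 * (\<Sum>i\<in>I. (x i - (\<Sum>j\<in>I. x j)/(n::real))^2)"
proof -
  have s: "(\<Sum>j\<in>I. r * x j) = r * (\<Sum>j\<in>I. x j)" by (rule sum_distrib_left[symmetric])
  have "r * x i - (\<Sum>j\<in>I. r * x j)/n = r * (x i - (\<Sum>j\<in>I. x j)/n)" for i
    unfolding s by (simp add: right_diff_distrib)
  then have "(\<Sum>i\<in>I. (r * x i - (\<Sum>j\<in>I. r * x j)/n)^2) = (\<Sum>i\<in>I. r^2 * (x i - (\<Sum>j\<in>I. x j)/n)^2)"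
    by (simp add: power_mult_distrib)
  also have "\<dots> = r^2 * (\<Sum>i\<in>I. (x i - (\<Sum>j\<in>I. x j)/(n::real))^2)"
    by (rule sum_distrib_left[symmetric])
  finally show ?thesis .
qed



lemma part_b:
  assumes d2: "CARD('d::finite) \<ge> 2"
  and AE: "affinely_equivariant all_empirical (S :: (real^'d) measure \<Rightarrow> real^'d^'d)"
  and WC: "weakly_continuous_on all_empirical S"
  shows "\<forall>Q\<in>all_empirical. S Q = 0"
proof -
  obtain k0 k1 :: 'd where k01: "k0 \<noteq> k1" using card2_two[OF d2] by blast
  define e where "e = (axis k0 1 :: real^'d)"
  have ee: "e \<bullet> e = 1" unfolding e_def by (simp add: inner_axis_axis)
  define E where "E N Y = empirical {..<N::nat} (Y :: nat \<Rightarrow> real^'d)" for N Y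
  have inE: "N \<ge> 1 \<Longrightarrow> E N Y \<in> all_empirical" for N Y
    unfolding all_empirical_def E_def by blast
  have nnd: "N \<ge> 1 \<Longrightarrow> nnd_matrix (S (E N Y))" for N Y
    using AE inE unfolding affinely_equivariant_def scatter_functional_def by blast
  have eqv: "S (E N (\<lambda>i. A *v Y i + v)) = A ** S (E N Y) ** transpose A"
    if "N \<ge> 1" "invertible A" for N Y A v
  proof -
    have "affine_image A v (E N Y) = E N (\<lambda>i. A *v Y i + v)"
      unfolding E_def using that by (intro emp_affine) (auto simp: lessThan_empty_iff)
    moreover have "S (affine_image A v (E N Y)) = A ** S (E N Y) ** transpose A"
      using AE inE[OF that(1)] that(2) unfolding affinely_equivariant_def by blast
    ultimately show ?thesis by simp
  qed
  have integ: "integral\<^sup>L (E N Y) f = (\<Sum>i<N. f (Y i)) / N" if "N \<ge> 1" "continuous_on UNIV f" for N Y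
    and f :: "real^'d \<Rightarrow> real"
    unfolding E_def using emp_integral[of "{..<N}" f Y] that by (auto simp: lessThan_empty_iff)
  have wc: "(\<lambda>k. S (E (Ns k) (Ys k))) \<longlonglongrightarrow> S (E N Y)"
    if "\<And>k. Ns k \<ge> 1" "N \<ge> 1" "weak_conv (\<lambda>k. E (Ns k) (Ys k)) (E N Y)" for Ns Ys N Y
  proof -
    have h: "(\<forall>k. E (Ns k) (Ys k) \<in> all_empirical) \<and> E N Y \<in> all_empirical \<and> weak_conv (\<lambda>k. E (Ns k) (Ys k)) (E N Y)"
      using inE that by auto
    show ?thesis using WC[unfolded weakly_continuous_on_def, rule_format, OF h] .
  qed
  have zero: "S (E N (\<lambda>i. 0)) = 0" if "N \<ge> 1" for N
  proof -
    have "S (E N (\<lambda>i. 0)) = S (E N (\<lambda>i. (2 *\<^sub>R mat 1) *v (\<lambda>i. 0) i + 0))" by (simp add: smat_mv)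
    also have "\<dots> = (2 *\<^sub>R mat 1) ** S (E N (\<lambda>i. 0)) ** transpose (2 *\<^sub>R mat 1)"
      by (rule eqv[OF that smat_inv]) simp
    also have "\<dots> = 4 *\<^sub>R S (E N (\<lambda>i. 0))"
      by (simp add: smat_left smat_right smat_transpose)
    finally show ?thesis by (metis (no_types, lifting) scaleR_cancel_right 
       numeral_One numeral_eq_iff semiring_norm(85) scaleR_one)
  qed
  have L1: "a \<bullet> (S (E N Y) *v a) = e \<bullet> (S (E N (\<lambda>i. (a \<bullet> Y i) *\<^sub>R e)) *v e)"
    if N1: "N \<ge> 1" for N Y a
  proof -
    define s where "s = a \<bullet> e"
    define \<sigma> where "\<sigma> = (if s \<ge> 0 then 1 else -1 :: real)"
    define t where "t k = \<sigma> * inverse (real (Suc k))" for k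
    define A where "A k = t k *\<^sub>R mat 1 + outer e a" for k
    define Z where "Z i = (a \<bullet> Y i) *\<^sub>R e" for i
    have t0: "t k \<noteq> 0" for k unfolding t_def \<sigma>_def by auto
    have ts: "t k + a \<bullet> e \<noteq> 0" for k
    proof -
      have p: "inverse (real (Suc k)) > 0" by simp
      show ?thesis
      proof (cases "s \<ge> 0")
        case True
        then have "t k = inverse (real (Suc k))" unfolding t_def \<sigma>_def by simp
        then show ?thesis using p True unfolding s_def by linarith
      next
        case False
        then have "t k = - inverse (real (Suc k))" unfolding t_def \<sigma>_def by simp
        then show ?thesis using p False unfolding s_def by linarith
      qed
    qed
    have invA: "invertible (A k)" for k unfolding A_def by (rule A_inv[OF t0 ts])
    have tlim: "t \<longlonglongrightarrow> 0"
      unfolding t_def using tendsto_mult_right_zero[OF LIMSEQ_inverse_real_of_nat, of \<sigma>] by simp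
    have Sk: "S (E N (\<lambda>i. A k *v Y i)) = A k ** S (E N Y) ** transpose (A k)" for k
      using eqv[OF N1 invA[of k], of Y 0] by simp
    have weak: "weak_conv (\<lambda>k. E N (\<lambda>i. A k *v Y i)) (E N Z)"
      unfolding weak_conv_def
    proof (intro allI impI)
      fix f :: "real^'d \<Rightarrow> real" assume f: "continuous_on UNIV f \<and> bounded (range f)"
      have "(\<lambda>k. (\<Sum>i<N. f (A k *v Y i)) / N) \<longlonglongrightarrow> (\<Sum>i<N. f (Z i)) / N"
      proof (intro tendsto_divide tendsto_const tendsto_sum)
        fix i
        have "(\<lambda>k. A k *v Y i) \<longlonglongrightarrow> Z i"
        proof -
          have "(\<lambda>k. t k *\<^sub>R Y i + Z i) \<longlonglongrightarrow> 0 *\<^sub>R Y i + Z i"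
            by (intro tendsto_intros tlim)
          then show ?thesis unfolding A_def A_mv Z_def by simp
        qed
        moreover have "isCont f (Z i)" using f by (simp add: continuous_on_eq_continuous_at)
        ultimately show "(\<lambda>k. f (A k *v Y i)) \<longlonglongrightarrow> f (Z i)"
          using isCont_tendsto_compose by blast
      qed (use N1 in auto)
      then show "(\<lambda>k. integral\<^sup>L (E N (\<lambda>i. A k *v Y i)) f) \<longlonglongrightarrow> integral\<^sup>L (E N Z) f"
        using integ[OF N1] f by simp
    qed
    have "(\<lambda>k. S (E N (\<lambda>i. A k *v Y i))) \<longlonglongrightarrow> S (E N Z)"
      by (rule wc[OF N1 N1 weak])
    then have lim1: "(\<lambda>k. e \<bullet> (S (E N (\<lambda>i. A k *v Y i)) *v e)) \<longlonglongrightarrow> e \<bullet> (S (E N Z) *v e)"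
      unfolding e_def axis_quad by (intro tendsto_intros)
    define M where "M = S (E N Y)"
    have val: "e \<bullet> (S (E N (\<lambda>i. A k *v Y i)) *v e) =
       (t k)^2 * (e \<bullet> (M *v e)) + t k * (e \<bullet> (M *v a) + a \<bullet> (M *v e)) + a \<bullet> (M *v a)" for k
    proof -
      have "e \<bullet> (S (E N (\<lambda>i. A k *v Y i)) *v e) = (e v* A k) \<bullet> (M *v (e v* A k))"
        unfolding Sk M_def by (rule quad_conj)
      moreover have "e v* A k = t k *\<^sub>R e + a" unfolding A_def A_vm ee by simp
      ultimately show ?thesis by (simp add: quad_expand)
    qed
    have lim2: "(\<lambda>k. e \<bullet> (S (E N (\<lambda>i. A k *v Y i)) *v e)) \<longlonglongrightarrow> a \<bullet> (M *v a)"
    proof -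
      have "(\<lambda>k. (t k)^2 * (e \<bullet> (M *v e)) + t k * (e \<bullet> (M *v a) + a \<bullet> (M *v e)) + a \<bullet> (M *v a))
          \<longlonglongrightarrow> 0^2 * (e \<bullet> (M *v e)) + 0 * (e \<bullet> (M *v a) + a \<bullet> (M *v e)) + a \<bullet> (M *v a)"
        by (intro tendsto_intros tlim)
      then show ?thesis unfolding val by simp
    qed
    show ?thesis using LIMSEQ_unique[OF lim2 lim1] unfolding M_def Z_def by simp
  qed
  have core: "\<exists>c\<ge>0. \<forall>Y a. a \<bullet> (S (E N Y) *v a) = c * (\<Sum>i\<in>{..<N}. (a \<bullet> Y i - (\<Sum>j\<in>{..<N}. a \<bullet> Y j)/card {..<N})^2)"
    if N2: "N \<ge> 2" for N
  proof (rule matrix_core[where I = "{..<N}" and ka = k0 and kb = k1 and M = "\<lambda>Y. S (E N Y)"])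
    have N1: "N \<ge> 1" using N2 by simp
    show "finite {..<N}" by simp
    show "2 \<le> card {..<N}" using N2 by simp
    show "k0 \<noteq> k1" by (rule k01)
    show "a \<bullet> (S (E N X) *v a) = axis k0 1 \<bullet> (S (E N (\<lambda>i. (a \<bullet> X i) *\<^sub>R axis k0 1)) *v axis k0 1)" for X a
      using L1[OF N1, of a X] unfolding e_def .
    show "S (E N (\<lambda>i. X i + v)) = S (E N X)" for X v
      using eqv[OF N1, of "mat 1" X v] by (simp add: inv_ker)
    show "S (E N (X \<circ> sw a b)) = S (E N X)" if "a \<in> {..<N}" "b \<in> {..<N}" for X a b
      unfolding E_def using emp_perm[of "{..<N}" "sw a b" X] sw_bij[OF that] N1
      by (simp add: lessThan_empty_iff)
    show "S (E N X) = S (E N Y)" if "\<forall>i\<in>{..<N}. X i = Y i" for X Y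
      unfolding E_def using emp_loc[of "{..<N}" X Y] that N1 by (simp add: lessThan_empty_iff)
    show "0 \<le> a \<bullet> (S (E N X) *v a)" for X a by (rule nnd_psd[OF nnd[OF N1]])
  qed
  define quad where "quad N Y a = (\<Sum>i\<in>{..<N}. (a \<bullet> Y i - (\<Sum>j\<in>{..<N}. a \<bullet> Y j)/card {..<N})^2)"
    for N and Y :: "nat \<Rightarrow> real^'d" and a
  have ex: "\<forall>N. \<exists>c. N \<ge> 2 \<longrightarrow> c \<ge> 0 \<and> (\<forall>Y a. a \<bullet> (S (E N Y) *v a) = c * quad N Y a)"
    using core unfolding quad_def by blast
  obtain cf where cf: "\<And>N. N \<ge> 2 \<Longrightarrow> cf N \<ge> 0"
    "\<And>N Y a. N \<ge> 2 \<Longrightarrow> a \<bullet> (S (E N Y) *v a) = cf N * quad N Y a"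
    using choice[OF ex] by blast
  define Zv where "Zv N i = (if i = N - 1 then e else 0)" for N i :: nat
  define \<kappa> where "\<kappa> N = quad N (Zv N) e" for N
  have kpos: "\<kappa> N > 0" if "N \<ge> 2" for N
  proof -
    have s1: "(\<Sum>j\<in>{..<N}. e \<bullet> Zv N j) = 1"
      using that by (simp add: Zv_def ee if_distrib cong: if_cong)
    have "(e \<bullet> Zv N (N - 1) - 1 / real N)^2 > 0"
      using that by (simp add: Zv_def ee)
    then show ?thesis unfolding \<kappa>_def quad_def s1 card_lessThan
      by (intro sum_pos2[of _ "N - 1"]) (use that in auto)
  qed
  have qscale: "quad N (\<lambda>i. r *\<^sub>R Zv N i) e = r^2 * \<kappa> N" for N r
    unfolding quad_def \<kappa>_def by (simp add: sq_scale)
  define r where "r k = (if cf (k+2) > 0 then sqrt (1 / (cf (k+2) * \<kappa> (k+2))) else 0)" for k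
  define Ys where "Ys k i = r k *\<^sub>R Zv (k+2) i" for k i
  have vk: "e \<bullet> (S (E (k+2) (Ys k)) *v e) = (if cf (k+2) > 0 then 1 else 0)" for k
  proof -
    have q: "quad (k+2) (Ys k) e = (r k)^2 * \<kappa> (k+2)" unfolding Ys_def by (rule qscale)
    have "e \<bullet> (S (E (k+2) (Ys k)) *v e) = cf (k+2) * quad (k+2) (Ys k) e" by (rule cf(2)) simp
    then have "e \<bullet> (S (E (k+2) (Ys k)) *v e) = cf (k+2) * ((r k)^2 * \<kappa> (k+2))" by (simp only: q)
    moreover have "\<kappa> (k+2) > 0" by (rule kpos) simp
    moreover have "cf (k+2) \<ge> 0" by (rule cf(1)) simp
    ultimately show ?thesis unfolding r_def by auto
  qed
  have weak0: "weak_conv (\<lambda>k. E (k+2) (Ys k)) (E 1 (\<lambda>i. 0))"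
    unfolding weak_conv_def
  proof (intro allI impI)
    fix f :: "real^'d \<Rightarrow> real" assume f: "continuous_on UNIV f \<and> bounded (range f)"
    obtain B where B: "\<And>x. \<bar>f x\<bar> \<le> B" using f unfolding bounded_iff by auto
    have sumk: "(\<Sum>i<k+2. f (Ys k i)) = real (Suc k) * f 0 + f (r k *\<^sub>R e)" for k
    proof -
      have "(\<Sum>i<Suc (Suc k). f (Ys k i)) = (\<Sum>i<Suc k. f (Ys k i)) + f (Ys k (Suc k))" by simp
      also have "(\<Sum>i<Suc k. f (Ys k i)) = (\<Sum>i<Suc k. f 0)"
        by (rule sum.cong) (auto simp: Ys_def Zv_def)
      finally show ?thesis by (simp add: Ys_def Zv_def)
    qed
    have int1: "integral\<^sup>L (E (k+2) (Ys k)) f = f 0 + (f (r k *\<^sub>R e) - f 0) / real (k+2)" for k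
      using integ[of "k+2" f "Ys k"] f sumk[of k] by (simp add: field_simps)
    have int0: "integral\<^sup>L (E 1 (\<lambda>i. 0)) f = f 0"
      using integ[of 1 f "\<lambda>i. 0"] f by simp
    have null: "(\<lambda>k. (f (r k *\<^sub>R e) - f 0) / real (k+2)) \<longlonglongrightarrow> 0"
    proof (rule Lim_null_comparison)
      show "\<forall>\<^sub>F k in sequentially. norm ((f (r k *\<^sub>R e) - f 0) / real (k+2)) \<le> 2 * B * inverse (real (Suc k))"
      proof (rule always_eventually, rule allI)
        fix k
        have "\<bar>f (r k *\<^sub>R e) - f 0\<bar> \<le> 2 * B" using B[of "r k *\<^sub>R e"] B[of 0] by linarith
        moreover have "B \<ge> 0" using B[of 0] by linarith
        ultimately show "norm ((f (r k *\<^sub>R e) - f 0) / real (k+2)) \<le> 2 * B * inverse (real (Suc k))"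
        proof -
          assume h1: "\<bar>f (r k *\<^sub>R e) - f 0\<bar> \<le> 2 * B" and h2: "B \<ge> 0"
          have "norm ((f (r k *\<^sub>R e) - f 0) / real (k+2)) = \<bar>f (r k *\<^sub>R e) - f 0\<bar> / real (k+2)"
            by (simp add: abs_divide)
          also have "\<dots> \<le> 2 * B / real (k+2)" by (rule divide_right_mono[OF h1]) simp
          also have "\<dots> \<le> 2 * B / real (Suc k)" by (rule divide_left_mono) (use h2 in auto)
          also have "\<dots> = 2 * B * inverse (real (Suc k))" by (simp add: divide_inverse)
          finally show ?thesis .
        qed
      qed
      show "(\<lambda>k. 2 * B * inverse (real (Suc k))) \<longlonglongrightarrow> 0"
        using tendsto_mult_right_zero[OF LIMSEQ_inverse_real_of_nat, of "2 * B"] by simp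
    qed
    show "(\<lambda>k. integral\<^sup>L (E (k+2) (Ys k)) f) \<longlonglongrightarrow> integral\<^sup>L (E 1 (\<lambda>i. 0)) f"
      unfolding int1 int0 using tendsto_add[OF tendsto_const null, of "f 0"] by simp
  qed
  have "(\<lambda>k. S (E (k+2) (Ys k))) \<longlonglongrightarrow> S (E 1 (\<lambda>i. 0))"
    by (rule wc[OF _ _ weak0]) auto
  then have "(\<lambda>k. S (E (k+2) (Ys k))) \<longlonglongrightarrow> 0" using zero[of 1] by simp
  then have "(\<lambda>k. e \<bullet> (S (E (k+2) (Ys k)) *v e)) \<longlonglongrightarrow> 0"
  proof -
    assume h: "(\<lambda>k. S (E (k+2) (Ys k))) \<longlonglongrightarrow> 0"
    have "(\<lambda>k. S (E (k+2) (Ys k)) $ k0 $ k0) \<longlonglongrightarrow> (0::real^'d^'d) $ k0 $ k0"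
      by (intro tendsto_vec_nth h)
    then show ?thesis unfolding e_def axis_quad by simp
  qed
  from LIMSEQ_D[OF this, of "1/2"] obtain K where
    K: "\<And>k. k \<ge> K \<Longrightarrow> norm (e \<bullet> (S (E (k+2) (Ys k)) *v e) - 0) < 1/2"
    by auto
  have cf0: "cf N = 0" if "N \<ge> K + 2" for N
  proof -
    define k where "k = N - 2"
    have k: "N = k + 2" "k \<ge> K" using that unfolding k_def by auto
    have "\<not> cf (k+2) > 0" using K[OF k(2)] unfolding vk by auto
    then show ?thesis using cf(1)[of N] k by simp
  qed
  have allzero: "S (E N Y) = 0" if "N \<ge> K + 2" for N Y
  proof (rule sym_quad_eq)
    show "transpose (S (E N Y)) = S (E N Y)" by (rule nnd_sym[OF nnd]) (use that in simp)
    show "transpose (0 :: real^'d^'d) = 0" by (simp add: transpose_def vec_eq_iff)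
    show "a \<bullet> (S (E N Y) *v a) = a \<bullet> (0 *v a)" for a
    proof -
      have "a \<bullet> (S (E N Y) *v a) = cf N * quad N Y a" by (rule cf(2)) (use that in simp)
      then show ?thesis by (simp add: cf0[OF that])
    qed
  qed
  show ?thesis
  proof
    fix Q :: "(real^'d) measure" assume Qin: "Q \<in> all_empirical"
    have "\<exists>n X. Q = empirical {..<n} X \<and> (n::nat) \<ge> 1"
      using Qin unfolding all_empirical_def by (simp only: mem_Collect_eq)
    then obtain n :: nat and X where Q0: "Q = empirical {..<n} X" and n1: "n \<ge> 1" by blast
    have Q: "Q = E n X" by (simp add: E_def Q0)
    define Ns where "Ns k = n * (k + K + 2)" for k
    define Yd where "Yd (k::nat) i = X (i mod n)" for k i
    have NsK: "Ns k \<ge> K + 2" for k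
    proof -
      have "1 * (k + K + 2) \<le> n * (k + K + 2)" by (rule mult_le_mono1[OF n1])
      then have "k + K + 2 \<le> n * (k + K + 2)" by simp
      then show ?thesis unfolding Ns_def by linarith
    qed
    have Ns1: "Ns k \<ge> 1" for k using NsK[of k] by linarith
    have weakd: "weak_conv (\<lambda>k. E (Ns k) (Yd k)) (E n X)"
      unfolding weak_conv_def
    proof (intro allI impI)
      fix f :: "real^'d \<Rightarrow> real" assume f: "continuous_on UNIV f \<and> bounded (range f)"
      have "integral\<^sup>L (E (Ns k) (Yd k)) f = integral\<^sup>L (E n X) f" for k
      proof -
        have "(\<Sum>i<Ns k. f (Yd k i)) = real (k + K + 2) * (\<Sum>i<n. f (X i))"
          unfolding Ns_def Yd_def mult.commute[of n] by (rule sum_mod_dup)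
        moreover have "integral\<^sup>L (E (Ns k) (Yd k)) f = (\<Sum>i<Ns k. f (Yd k i)) / real (Ns k)"
          using integ[OF Ns1[of k], of f "Yd k"] f by blast
        moreover have "integral\<^sup>L (E n X) f = (\<Sum>i<n. f (X i)) / real n"
          using integ[OF n1, of f X] f by blast
        moreover have "real (Ns k) = real n * real (k + K + 2)" unfolding Ns_def by (simp only: of_nat_mult)
        moreover have "real (k + K + 2) > 0" by simp
        moreover have gen: "\<And>m T nn :: real. m > 0 \<Longrightarrow> nn > 0 \<Longrightarrow> (m * T) / (nn * m) = T / nn"
          by simp
        moreover have "real n > 0" using n1 by simp
        ultimately show ?thesis by metis
      qed
      then show "(\<lambda>k. integral\<^sup>L (E (Ns k) (Yd k)) f) \<longlonglongrightarrow> integral\<^sup>L (E n X) f" by simp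
    qed
    have "(\<lambda>k. S (E (Ns k) (Yd k))) \<longlonglongrightarrow> S (E n X)" by (rule wc[OF Ns1 n1 weakd])
    then have "(\<lambda>k. 0) \<longlonglongrightarrow> S (E n X)" using allzero[OF NsK] by simp
    then show "S Q = 0" unfolding Q using LIMSEQ_unique[OF tendsto_const] by metis
  qed
qed


theorem theorem5:
  assumes "CARD('d::finite) \<ge> 2"
  shows
   "(CARD('n::finite) \<ge> 2 \<longrightarrow>
      (\<forall>S :: (real^'d) measure \<Rightarrow> real^'d^'d.
        singularly_affinely_equivariant (range (data_emp :: real^'n^'d \<Rightarrow> _)) S \<longrightarrow>
        (\<exists>c\<ge>0. \<forall>X :: real^'n^'d.
           S (data_emp (centered X)) = c *\<^sub>R (centered X ** transpose (centered X)))))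
    \<and>
    (\<forall>S :: (real^'d) measure \<Rightarrow> real^'d^'d.
        affinely_equivariant all_empirical S \<and> weakly_continuous_on all_empirical S \<longrightarrow>
        (\<forall>Q\<in>all_empirical. S Q = 0))"
proof (intro conjI impI allI)
  fix S :: "(real^'d) measure \<Rightarrow> real^'d^'d"
  assume n2: "CARD('n::finite) \<ge> 2"
    and S: "singularly_affinely_equivariant (range (data_emp :: real^'n^'d \<Rightarrow> _)) S"
  show "\<exists>c\<ge>0. \<forall>X :: real^'n^'d.
           S (data_emp (centered X)) = c *\<^sub>R (centered X ** transpose (centered X))"
    by (rule part_a[OF assms n2 S])
next
  fix S :: "(real^'d) measure \<Rightarrow> real^'d^'d"
  assume h: "affinely_equivariant all_empirical S \<and> weakly_continuous_on all_empirical S"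
  show "\<forall>Q\<in>all_empirical. S Q = 0"
    using part_b[OF assms] h by blast
qed

end
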